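(* Let $G$ be a graph and $a\neq b$ vertices of $G$. Then $a$ and $b$ are twins (i.e. $N(a)\setminus\{b\}=N(b)\setminus\{a\}$) if and only if the eigenvalue support of $e_a-e_b$ with respect to the Laplacian of $G$ consists of one eigenvalue, which is an integer.
   Context: $N(v)$ denotes the neighbourhood of $v$. Let $L=\Delta-A$ be the Laplacian of $G$ with spectral decomposition $L=\sum_r\theta_rE_r$ ($\theta_r$ distinct eigenvalues, $E_r$ orthogonal projections onto eigenspaces). The eigenvalue support of $x$ is the set of $\theta_r$ with $E_rx\neq0$. *)

theory Defs
  imports "HOL-Analysis.Analysis"
begin

definition simple_graph :: "('n::finite \<Rightarrow> 'n \<Rightarrow> bool) \<Rightarrow> bool" where
  "simple_graph E \<longleftrightarrow> (\<forall>u v. E u v \<longleftrightarrow> E v u) \<and> (\<forall>v. \<not> E v v)"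

definition nbhd :: "('n \<Rightarrow> 'n \<Rightarrow> bool) \<Rightarrow> 'n \<Rightarrow> 'n set" where
  "nbhd E v = {u. E v u}"

definition twins :: "('n \<Rightarrow> 'n \<Rightarrow> bool) \<Rightarrow> 'n \<Rightarrow> 'n \<Rightarrow> bool" where
  "twins E a b \<longleftrightarrow> nbhd E a - {b} = nbhd E b - {a}"

definition laplacian :: "('n::finite \<Rightarrow> 'n \<Rightarrow> bool) \<Rightarrow> real^'n^'n" where
  "laplacian E = (\<chi> i j. (if i = j then real (card (nbhd E i)) else 0)
                        - (if E i j then 1 else 0))"

definition eigenspace :: "real^'n^'n \<Rightarrow> real \<Rightarrow> (real^'n) set" where
  "eigenspace M \<theta> = {v. M *v v = \<theta> *\<^sub>R v}"

definition is_eigenvalue :: "real^'n^'n \<Rightarrow> real \<Rightarrow> bool" where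
  "is_eigenvalue M \<theta> \<longleftrightarrow> (\<exists>v. v \<noteq> 0 \<and> M *v v = \<theta> *\<^sub>R v)"

definition orth_proj :: "(real^'n) set \<Rightarrow> real^'n \<Rightarrow> real^'n" where
  "orth_proj W x = (THE y. y \<in> W \<and> (\<forall>w\<in>W. (x - y) \<bullet> w = 0))"

definition eig_proj :: "real^'n^'n \<Rightarrow> real \<Rightarrow> real^'n \<Rightarrow> real^'n" where
  "eig_proj M \<theta> x = orth_proj (eigenspace M \<theta>) x"

definition eigenvalue_support :: "real^'n^'n \<Rightarrow> real^'n \<Rightarrow> real set" where
  "eigenvalue_support M x = {\<theta>. is_eigenvalue M \<theta> \<and> eig_proj M \<theta> x \<noteq> 0}"

end

theory Submission
  imports Defs
begin

lemma no_orth: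
  fixes M :: "real^'n^'n"
  assumes sym: "\<And>u v. (M *v u) \<bullet> v = u \<bullet> (M *v v)"
  and z: "\<And>\<mu> v. M *v v = \<mu> *\<^sub>R v \<Longrightarrow> z \<bullet> v = 0"
  shows "z = 0"
proof (rule ccontr)
  assume nz: "z \<noteq> 0"
  define U where "U = {z. \<forall>\<mu> v. M *v v = \<mu> *\<^sub>R v \<longrightarrow> z \<bullet> v = 0}"
  have subU: "subspace U"
    unfolding subspace_def U_def by (auto simp: inner_add_left) (metis add.right_neutral)
  have invU: "M *v w \<in> U" if "w \<in> U" for w
    using that unfolding U_def by (auto simp: sym)
  have zU: "z \<in> U" using z unfolding U_def by auto
  define S where "S = U \<inter> sphere 0 1"
  have cS: "compact S" unfolding S_def
    using closed_subspace[OF subU] by (metis Int_commute compact_Int_closed compact_sphere)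
  have "z /\<^sub>R norm z \<in> S" using zU nz subU unfolding S_def
    by (simp add: subspace_scale)
  hence neS: "S \<noteq> {}" by auto
  have cont: "continuous_on S (\<lambda>w. w \<bullet> (M *v w))"
    by (intro continuous_intros linear_continuous_on matrix_vector_mul_bounded_linear)
  obtain z0 where z0S: "z0 \<in> S" and mx: "\<And>w. w \<in> S \<Longrightarrow> w \<bullet> (M *v w) \<le> z0 \<bullet> (M *v z0)"
    using continuous_attains_sup[OF cS neS cont] by auto
  define l where "l = z0 \<bullet> (M *v z0)"
  have z0U: "z0 \<in> U" and nz0: "norm z0 = 1" using z0S unfolding S_def by auto
  have Q: "w \<bullet> (M *v w) \<le> l * (w \<bullet> w)" if "w \<in> U" for w
  proof (cases "w = 0")
    case True then show ?thesis by simp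
  next
    case False
    have "w /\<^sub>R norm w \<in> S" using that False subU unfolding S_def
      by (simp add: subspace_scale)
    hence "(w /\<^sub>R norm w) \<bullet> (M *v (w /\<^sub>R norm w)) \<le> l" using mx l_def by metis
    hence "(w \<bullet> (M *v w)) / (norm w)^2 \<le> l"
      by (simp add: matrix_vector_mult_scaleR power2_eq_square divide_inverse mult.commute mult.left_commute)
    hence "w \<bullet> (M *v w) \<le> l * (norm w)^2" using False by (simp add: divide_le_eq)
    then show ?thesis by (simp add: power2_norm_eq_inner)
  qed
  have z0z0: "z0 \<bullet> z0 = 1" using nz0 by (simp add: power2_norm_eq_inner[symmetric])
  define w where "w = l *\<^sub>R z0 - M *v z0"
  have wU: "w \<in> U" unfolding w_def using subU z0U invU
    by (simp add: subspace_diff subspace_scale)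
  define c where "c = w \<bullet> w"
  define d where "d = l * (w \<bullet> w) - w \<bullet> (M *v w)"
  have d0: "d \<ge> 0" using Q[OF wU] d_def by simp
  have key: "0 \<le> 2 * t * c + t^2 * d" for t
  proof -
    have "z0 + t *\<^sub>R w \<in> U" using subU z0U wU by (simp add: subspace_add subspace_scale)
    from Q[OF this]
    have "0 \<le> l * ((z0 + t *\<^sub>R w) \<bullet> (z0 + t *\<^sub>R w)) - (z0 + t *\<^sub>R w) \<bullet> (M *v (z0 + t *\<^sub>R w))" by simp
    also have "\<dots> = (l * (z0 \<bullet> z0) - z0 \<bullet> (M *v z0)) + t * (l * (z0 \<bullet> w) - w \<bullet> (M *v z0))
       + t * (l * (w \<bullet> z0) - z0 \<bullet> (M *v w)) + t^2 * d"
      unfolding d_def by (simp add: algebra_simps inner_add_left inner_add_right power2_eq_square)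
    also have "z0 \<bullet> (M *v w) = w \<bullet> (M *v z0)" using sym[of z0 w] by (simp add: inner_commute)
    also have "l * (z0 \<bullet> z0) - z0 \<bullet> (M *v z0) = 0" using z0z0 l_def by simp
    also have "l * (z0 \<bullet> w) - w \<bullet> (M *v z0) = c" unfolding c_def w_def
      by (simp add: inner_diff_left inner_commute)
    also have "l * (w \<bullet> z0) - w \<bullet> (M *v z0) = c" unfolding c_def w_def by (simp add: inner_diff_left inner_commute)
    finally show ?thesis by (simp add: inner_commute algebra_simps)
  qed
  have c0: "c = 0"
  proof (rule ccontr)
    assume "c \<noteq> 0"
    hence cp: "c > 0" unfolding c_def by simp
    define t where "t = - c / (d+1)"
    have tn: "t < 0" unfolding t_def using cp d0 by (simp add: divide_pos_pos)
    have "t * d = - c * (d / (d+1))" unfolding t_def by simp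
    moreover have "d / (d+1) < 1" using d0 by simp
    ultimately have "t * d > - c" using cp
      by (metis mult_less_cancel_left_pos mult.right_neutral neg_less_iff_less mult_minus_left)
    hence "2 * c + t * d > 0" using cp by simp
    hence "t * (2 * c + t * d) < 0" using tn by (simp add: mult_neg_pos)
    moreover have "0 \<le> 2 * t * c + t^2 * d" by (rule key)
    moreover have "2 * t * c + t^2 * d = t * (2 * c + t * d)" by (simp add: algebra_simps power2_eq_square)
    ultimately show False by simp
  qed
  hence "M *v z0 = l *\<^sub>R z0" unfolding c_def w_def by simp
  hence "z0 \<bullet> z0 = 0" using z0U unfolding U_def by blast
  with z0z0 show False by simp
qed


lemma lap_transpose:
  assumes "simple_graph E"
  shows "transpose (laplacian E) = laplacian E"
  using assms unfolding simple_graph_def laplacian_def transpose_def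
  by (simp add: vec_eq_iff)

lemma lap_sym:
  assumes "simple_graph E"
  shows "(laplacian E *v u) \<bullet> v = u \<bullet> (laplacian E *v v)"
proof -
  have "laplacian E *v u = u v* laplacian E"
    using transpose_matrix_vector[of "laplacian E" u] lap_transpose[OF assms] by simp
  thus ?thesis by (simp add: dot_lmul_matrix)
qed

lemma eig_subspace: "subspace (eigenspace M \<theta>)"
  unfolding subspace_def eigenspace_def
  by (simp add: matrix_vector_right_distrib matrix_vector_mult_scaleR scaleR_add_right)

lemma orth_proj_eq:
  assumes W: "subspace W" and y: "y \<in> W" and o: "\<forall>w\<in>W. (x - y) \<bullet> w = 0"
  shows "orth_proj W x = y"
  unfolding orth_proj_def
proof (rule the_equality)
  show "y \<in> W \<and> (\<forall>w\<in>W. (x - y) \<bullet> w = 0)" using y o by blast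
next
  fix y' assume h: "y' \<in> W \<and> (\<forall>w\<in>W. (x - y') \<bullet> w = 0)"
  have d: "y' - y \<in> W" using h y W by (simp add: subspace_diff)
  have "(y' - y) \<bullet> (y' - y) = (x - y) \<bullet> (y' - y) - (x - y') \<bullet> (y' - y)"
    by (simp add: inner_diff_left)
  also have "\<dots> = 0" using o h d by simp
  finally show "y' = y" by simp
qed

lemma orth_proj_props:
  assumes W: "subspace W"
  shows "orth_proj W x \<in> W \<and> (\<forall>w\<in>W. (x - orth_proj W x) \<bullet> w = 0)"
proof -
  obtain y z where y: "y \<in> span W" and z: "\<And>w. w \<in> span W \<Longrightarrow> orthogonal z w" and xe: "x = y + z"
    using orthogonal_subspace_decomp_exists[of W x] by blast
  have sp: "span W = W" using W span_eq_iff by blast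
  have yW: "y \<in> W" using y sp by simp
  have o: "\<forall>w\<in>W. (x - y) \<bullet> w = 0" using z xe sp by (simp add: orthogonal_def)
  show ?thesis using orth_proj_eq[OF W yW o] yW o by simp
qed

lemma orth_proj_zero_iff:
  assumes W: "subspace W"
  shows "orth_proj W x = 0 \<longleftrightarrow> (\<forall>w\<in>W. x \<bullet> w = 0)"
proof
  assume "orth_proj W x = 0" thus "\<forall>w\<in>W. x \<bullet> w = 0" using orth_proj_props[OF W, of x] by simp
next
  assume "\<forall>w\<in>W. x \<bullet> w = 0"
  thus "orth_proj W x = 0" using orth_proj_eq[OF W, of 0 x] W by (simp add: subspace_0)
qed

lemma eig_orth:
  assumes sym: "\<And>u v. (M *v u) \<bullet> v = u \<bullet> (M *v v)"
  and "M *v u = \<theta> *\<^sub>R u" and "M *v v = \<mu> *\<^sub>R v" and "\<theta> \<noteq> \<mu>"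
  shows "u \<bullet> v = 0"
proof -
  have "\<theta> * (u \<bullet> v) = \<mu> * (u \<bullet> v)" using sym[of u v] assms(2,3) by simp
  thus ?thesis using assms(4) by simp
qed


lemma lap_x:
  fixes E :: "'n::finite \<Rightarrow> 'n \<Rightarrow> bool"
  shows "(laplacian E *v (axis a 1 - axis b 1)) $ i = laplacian E $ i $ a - laplacian E $ i $ b"
proof -
  have ax: "(A *v axis j 1) $ i = A $ i $ j" for A :: "real^'n^'n" and j
    by (metis cart_eq_inner_axis matrix_vector_mul_component)
  show ?thesis by (simp add: matrix_vector_mult_diff_distrib ax)
qed

lemma card_split:
  fixes E :: "'n::finite \<Rightarrow> 'n \<Rightarrow> bool"
  shows "real (card (nbhd E a)) = real (card (nbhd E a - {b})) + (if E a b then 1 else 0)"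
proof (cases "E a b")
  case True
  hence "b \<in> nbhd E a" by (simp add: nbhd_def)
  moreover hence "card (nbhd E a) \<ge> 1" by (metis One_nat_def Suc_leI card_gt_0_iff empty_iff finite)
  ultimately show ?thesis using True by (simp add: card_Diff_singleton of_nat_diff)
next
  case False
  hence "nbhd E a - {b} = nbhd E a" by (auto simp: nbhd_def)
  thus ?thesis using False by simp
qed

lemma twins_eigvec:
  fixes E :: "'n::finite \<Rightarrow> 'n \<Rightarrow> bool"
  assumes g: "simple_graph E" and ab: "a \<noteq> b" and tw: "twins E a b"
  shows "laplacian E *v (axis a 1 - axis b 1) =
     (real (card (nbhd E a)) + (if E a b then 1 else 0)) *\<^sub>R (axis a 1 - axis b 1)"
proof -
  have sy: "E u v \<longleftrightarrow> E v u" and ir: "\<not> E v v" for u v using g unfolding simple_graph_def by auto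
  have ts: "nbhd E a - {b} = nbhd E b - {a}" using tw unfolding twins_def .
  have cd: "real (card (nbhd E b)) = real (card (nbhd E a))"
    using card_split[of E a b] card_split[of E b a] ts sy[of a b] by simp
  have oth: "E i a \<longleftrightarrow> E i b" if "i \<noteq> a" "i \<noteq> b" for i
  proof -
    have "i \<in> nbhd E a - {b} \<longleftrightarrow> i \<in> nbhd E b - {a}" using ts by simp
    thus ?thesis using that sy[of i a] sy[of i b] by (simp add: nbhd_def)
  qed
  show ?thesis
  proof (rule vec_eq_iff[THEN iffD2, rule_format])
    fix i
    show "(laplacian E *v (axis a 1 - axis b 1)) $ i =
      ((real (card (nbhd E a)) + (if E a b then 1 else 0)) *\<^sub>R (axis a 1 - axis b 1)) $ i"
      unfolding lap_x using ab ir[of a] ir[of b] sy[of a b] cd oth[of i]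
      by (cases "i = a"; cases "i = b") (auto simp: laplacian_def axis_def)
  qed
qed

lemma eigvec_twins:
  fixes E :: "'n::finite \<Rightarrow> 'n \<Rightarrow> bool"
  assumes g: "simple_graph E" and ab: "a \<noteq> b"
    and ev: "laplacian E *v (axis a 1 - axis b 1) = \<theta> *\<^sub>R (axis a 1 - axis b 1)"
  shows "twins E a b"
proof -
  have sy: "E u v \<longleftrightarrow> E v u" and ir: "\<not> E v v" for u v using g unfolding simple_graph_def by auto
  have oth: "E i a \<longleftrightarrow> E i b" if "i \<noteq> a" "i \<noteq> b" for i
  proof -
    have "(laplacian E *v (axis a 1 - axis b 1)) $ i = (\<theta> *\<^sub>R (axis a 1 - axis b 1)) $ i"
      using ev by simp
    thus ?thesis unfolding lap_x using that
      by (auto simp: laplacian_def axis_def split: if_splits)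
  qed
  show ?thesis unfolding twins_def nbhd_def
    using oth sy ir by (auto; metis)
qed


theorem mainTheorem11:
  fixes E :: "'n::finite \<Rightarrow> 'n \<Rightarrow> bool" and a b :: 'n
  assumes "simple_graph E" and "a \<noteq> b"
  shows "twins E a b \<longleftrightarrow>
    (\<exists>\<theta>. eigenvalue_support (laplacian E) (axis a 1 - axis b 1) = {\<theta>} \<and> \<theta> \<in> \<int>)"
proof -
  let ?L = "laplacian E"
  let ?x = "axis a 1 - axis b 1 :: real^'n"
  have sym: "\<And>u v. (?L *v u) \<bullet> v = u \<bullet> (?L *v v)" using lap_sym[OF assms(1)] .
  have xnz: "?x \<noteq> 0"
  proof
    assume "?x = 0"
    hence "?x $ a = 0" by simp
    thus False using assms(2) by (simp add: axis_def)
  qed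
  show ?thesis
  proof
    assume tw: "twins E a b"
    define t where "t = real (card (nbhd E a)) + (if E a b then 1 else 0)"
    have ev: "?L *v ?x = t *\<^sub>R ?x" using twins_eigvec[OF assms tw] t_def by simp
    have tint: "t \<in> \<int>" unfolding t_def by simp
    have "eigenvalue_support ?L ?x = {t}"
    proof (rule set_eqI)
      fix m
      show "m \<in> eigenvalue_support ?L ?x \<longleftrightarrow> m \<in> {t}"
      proof
        assume m: "m \<in> eigenvalue_support ?L ?x"
        show "m \<in> {t}"
        proof (rule ccontr)
          assume "m \<notin> {t}"
          hence "\<forall>w\<in>eigenspace ?L m. ?x \<bullet> w = 0"
            using eig_orth[OF sym ev] unfolding eigenspace_def by auto
          hence "eig_proj ?L m ?x = 0" unfolding eig_proj_def
            using orth_proj_zero_iff[OF eig_subspace] by blast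
          thus False using m unfolding eigenvalue_support_def by simp
        qed
      next
        assume "m \<in> {t}"
        hence mt: "m = t" by simp
        have "?x \<in> eigenspace ?L t" using ev unfolding eigenspace_def by simp
        hence "eig_proj ?L t ?x = ?x" unfolding eig_proj_def
          by (intro orth_proj_eq[OF eig_subspace]) auto
        moreover have "is_eigenvalue ?L t" unfolding is_eigenvalue_def using ev xnz by blast
        ultimately show "m \<in> eigenvalue_support ?L ?x" using mt xnz
          unfolding eigenvalue_support_def by simp
      qed
    qed
    thus "\<exists>\<theta>. eigenvalue_support ?L ?x = {\<theta>} \<and> \<theta> \<in> \<int>" using tint by blast
  next
    assume "\<exists>\<theta>. eigenvalue_support ?L ?x = {\<theta>} \<and> \<theta> \<in> \<int>"
    then obtain t where supp: "eigenvalue_support ?L ?x = {t}" by blast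
    define y where "y = eig_proj ?L t ?x"
    have yW: "y \<in> eigenspace ?L t" and yo: "\<forall>w\<in>eigenspace ?L t. (?x - y) \<bullet> w = 0"
      using orth_proj_props[OF eig_subspace, of ?L t ?x] unfolding y_def eig_proj_def by auto
    have yev: "?L *v y = t *\<^sub>R y" using yW unfolding eigenspace_def by simp
    have "?x - y = 0"
    proof (rule no_orth[OF sym])
      fix m v assume vev: "?L *v v = m *\<^sub>R v"
      show "(?x - y) \<bullet> v = 0"
      proof (cases "m = t")
        case True
        thus ?thesis using yo vev unfolding eigenspace_def by simp
      next
        case False
        show ?thesis
        proof (cases "v = 0")
          case True thus ?thesis by simp
        next
          case vnz: False
          have "is_eigenvalue ?L m" unfolding is_eigenvalue_def using vev vnz by blast
          hence "eig_proj ?L m ?x = 0" using supp False unfolding eigenvalue_support_def by auto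
          hence "?x \<bullet> v = 0" unfolding eig_proj_def
            using orth_proj_zero_iff[OF eig_subspace] vev unfolding eigenspace_def by blast
          moreover have "y \<bullet> v = 0" using eig_orth[OF sym yev vev] False by simp
          ultimately show ?thesis by (simp add: inner_diff_left)
        qed
      qed
    qed
    hence "?x = y" by simp
    hence "?L *v ?x = t *\<^sub>R ?x" using yev by simp
    thus "twins E a b" using eigvec_twins[OF assms] by blast
  qed
qed

end
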